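(* Let $q,r,\nu$ be positive integers with $r\ge q$ and $\nu\ge q$. There exists a matrix $C\in\mathbb{R}^{\nu r\times q}$ not depending on $z$ such that $\mathcal{M}^0(z)C=I_q$ for all $z$; consequently for every $b\in\mathbb{R}^q$ the equation $\mathcal{M}^0(z)X=b$ has the $z$-independent solution $X=Cb$. Such a constant matrix $C$ is unique iff $\nu=q$. In all cases one can take $C=(I_\nu\otimes D_r^{-1})\mathcal{B}^0D_q^{-1}$.
   Context: Matrix indices start at $0$. $u(z)=(1,\dots,z^{q-1})^\top$, $w(z)=(1,\dots,z^{r-1})$, $M(z)=u(z)w(z)$, and $\mathcal{M}^0(z)=(M(z),M'(z),\dots,M^{(\nu-1)}(z))\in\mathbb{C}^{q\times\nu r}$. $D_n=\mathrm{diag}(0!,\dots,(n-1)!)$. $B^k\in\mathbb{R}^{r\times q}$ has entries $B^k_{ij}=(-1)^i\binom{q}{k+1}$ if $i+j=k$ and $0$ otherwise, and $\mathcal{B}^0\in\mathbb{R}^{\nu r\times q}$ stacks $B^0,\dots,B^{\nu-1}$ vertically. *)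

theory Defs
  imports "HOL-Analysis.Analysis" "Jordan_Normal_Form.Gauss_Jordan_Elimination"
begin

text \<open>Indices start at 0. u(z) = (1,..,z^(q-1))^T, w(z) = (1,..,z^(r-1)).\<close>
definition uvec :: "nat \<Rightarrow> complex \<Rightarrow> complex mat" where
  "uvec q z = mat q 1 (\<lambda>(i,_). z ^ i)"

definition wvec :: "nat \<Rightarrow> complex \<Rightarrow> complex mat" where
  "wvec r z = mat 1 r (\<lambda>(_,j). z ^ j)"

definition Mmat :: "nat \<Rightarrow> nat \<Rightarrow> complex \<Rightarrow> complex mat" where
  "Mmat q r z = uvec q z * wvec r z"

definition Mderiv :: "nat \<Rightarrow> nat \<Rightarrow> nat \<Rightarrow> complex \<Rightarrow> complex mat" where
  "Mderiv q r k z = mat q r (\<lambda>(i,j). (deriv ^^ k) (\<lambda>\<zeta>. Mmat q r \<zeta> $$ (i,j)) z)"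

text \<open>calM0 = (M, M', ..., M^(nu-1)), a q x (nu*r) matrix; column k*r+j is column j of M^(k).\<close>
definition calM0 :: "nat \<Rightarrow> nat \<Rightarrow> nat \<Rightarrow> complex \<Rightarrow> complex mat" where
  "calM0 q r \<nu> z = mat q (\<nu> * r) (\<lambda>(i,c). Mderiv q r (c div r) z $$ (i, c mod r))"

definition Dmat :: "nat \<Rightarrow> real mat" where
  "Dmat n = mat n n (\<lambda>(i,j). if i = j then fact i else 0)"

definition Bmat :: "nat \<Rightarrow> nat \<Rightarrow> nat \<Rightarrow> real mat" where
  "Bmat q r k = mat r q (\<lambda>(i,j). if i + j = k then (-1) ^ i * real (q choose (k+1)) else 0)"

text \<open>calB0 stacks B^0, ..., B^(nu-1) vertically; row k*r+i is row i of B^k.\<close>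
definition calB0 :: "nat \<Rightarrow> nat \<Rightarrow> nat \<Rightarrow> real mat" where
  "calB0 q r \<nu> = mat (\<nu> * r) q (\<lambda>(c,j). Bmat q r (c div r) $$ (c mod r, j))"

definition kron :: "'a :: times mat \<Rightarrow> 'a mat \<Rightarrow> 'a mat" where
  "kron A B = mat (dim_row A * dim_row B) (dim_col A * dim_col B)
     (\<lambda>(i,j). A $$ (i div dim_row B, j div dim_col B) * B $$ (i mod dim_row B, j mod dim_col B))"

definition minv :: "real mat \<Rightarrow> real mat" where
  "minv A = the (mat_inverse A)"

end

theory Submission
  imports Defs "HOL-Computational_Algebra.Formal_Power_Series"
begin

definition ff :: "nat \<Rightarrow> nat \<Rightarrow> nat" where "ff n k = (\<Prod>t<k. n - t)"

lemma ff_Suc: "ff n (Suc k) = ff n k * (n - k)" by (simp add: ff_def)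
lemma ff_zero: "n < k \<Longrightarrow> ff n k = 0"
  unfolding ff_def prod_zero_iff[OF finite_lessThan] by (intro bexI[of _ n]) auto

lemma deriv_monom: "deriv (\<lambda>\<zeta>::complex. c * \<zeta>^m) = (\<lambda>\<zeta>. c * of_nat m * \<zeta>^(m-1))"
proof
  fix z :: complex
  show "deriv (\<lambda>\<zeta>. c * \<zeta>^m) z = c * of_nat m * z^(m-1)"
    by (rule DERIV_imp_deriv) (auto intro!: derivative_eq_intros)
qed

lemma deriv_pow: "(deriv ^^ k) (\<lambda>\<zeta>::complex. c * \<zeta>^n) = (\<lambda>\<zeta>. c * of_nat (ff n k) * \<zeta>^(n-k))"
proof (induction k)
  case 0 then show ?case by (simp add: ff_def)
next
  case (Suc k)
  have "(deriv ^^ Suc k) (\<lambda>\<zeta>. c * \<zeta>^n) = deriv (\<lambda>\<zeta>. (c * of_nat (ff n k)) * \<zeta>^(n-k))"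
    by (simp add: Suc)
  also have "\<dots> = (\<lambda>\<zeta>. (c * of_nat (ff n k)) * of_nat (n-k) * \<zeta>^(n-k-1))"
    by (rule deriv_monom)
  finally show ?case by (simp add: ff_Suc mult.assoc)
qed

lemma deriv_pow1: "(deriv ^^ k) (\<lambda>\<zeta>::complex. \<zeta>^n) = (\<lambda>\<zeta>. of_nat (ff n k) * \<zeta>^(n-k))"
  using deriv_pow[of k 1 n] by simp

lemma Mmat_entry: "i < q \<Longrightarrow> j < r \<Longrightarrow> Mmat q r z $$ (i,j) = z^(i+j)"
  by (simp add: Mmat_def uvec_def wvec_def scalar_prod_def power_add)

lemma calM0_entry: assumes "i < q" "k < \<nu>" "j < r"
  shows "calM0 q r \<nu> z $$ (i, k*r+j) = of_nat (ff (i+j) k) * z^(i+j-k)"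
proof -
  have r: "0 < r" using assms by auto
  have c: "k*r+j < \<nu>*r"
  proof -
    have "(k+1)*r \<le> \<nu>*r" using assms by (intro mult_le_mono1) auto
    then show ?thesis using assms by simp
  qed
  have dm: "(k*r+j) div r = k" "(k*r+j) mod r = j" using assms by auto
  have f: "(\<lambda>\<zeta>. Mmat q r \<zeta> $$ (i,j)) = (\<lambda>\<zeta>. \<zeta>^(i+j))"
    using assms by (simp add: Mmat_entry)
  show ?thesis using assms c
    by (simp add: calM0_def Mderiv_def dm f deriv_pow1)
qed

lemma sum_single: "finite A \<Longrightarrow> i \<in> A \<Longrightarrow> (\<And>k. k \<in> A \<Longrightarrow> k \<noteq> i \<Longrightarrow> f k = 0) \<Longrightarrow> sum f A = f i"
  by (simp add: sum.remove sum.neutral)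

definition Dinv :: "nat \<Rightarrow> real mat" where
  "Dinv n = mat n n (\<lambda>(i,j). if i = j then 1 / fact i else 0)"

lemma Dmat_Dinv: "Dmat n * Dinv n = 1\<^sub>m n" "Dinv n * Dmat n = 1\<^sub>m n"
proof -
  show "Dmat n * Dinv n = 1\<^sub>m n"
  proof (rule eq_matI)
    fix i j assume ij: "i < dim_row (1\<^sub>m n)" "j < dim_col (1\<^sub>m n)"
    have "(Dmat n * Dinv n) $$ (i,j) = (\<Sum>k\<in>{0..<n}. Dmat n $$ (i,k) * Dinv n $$ (k,j))"
      using ij by (simp add: Dmat_def Dinv_def scalar_prod_def)
    also have "\<dots> = Dmat n $$ (i,i) * Dinv n $$ (i,j)"
      using ij by (intro sum_single) (auto simp: Dmat_def)
    also have "\<dots> = (if i = j then 1 else 0)" using ij by (simp add: Dmat_def Dinv_def)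
    finally show "(Dmat n * Dinv n) $$ (i,j) = 1\<^sub>m n $$ (i,j)" using ij by simp
  qed (auto simp: Dmat_def Dinv_def)
  show "Dinv n * Dmat n = 1\<^sub>m n"
  proof (rule eq_matI)
    fix i j assume ij: "i < dim_row (1\<^sub>m n)" "j < dim_col (1\<^sub>m n)"
    have "(Dinv n * Dmat n) $$ (i,j) = (\<Sum>k\<in>{0..<n}. Dinv n $$ (i,k) * Dmat n $$ (k,j))"
      using ij by (simp add: Dmat_def Dinv_def scalar_prod_def)
    also have "\<dots> = Dinv n $$ (i,i) * Dmat n $$ (i,j)"
      using ij by (intro sum_single) (auto simp: Dinv_def)
    also have "\<dots> = (if i = j then 1 else 0)" using ij by (simp add: Dmat_def Dinv_def)
    finally show "(Dinv n * Dmat n) $$ (i,j) = 1\<^sub>m n $$ (i,j)" using ij by simp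
  qed (auto simp: Dmat_def Dinv_def)
qed

lemma minv_Dmat: "minv (Dmat n) = Dinv n"
proof -
  have D: "Dmat n \<in> carrier_mat n n" by (simp add: Dmat_def)
  have Di: "Dinv n \<in> carrier_mat n n" by (simp add: Dinv_def)
  show ?thesis
  proof (cases "mat_inverse (Dmat n)")
    case None
    from mat_inverse(1)[OF D None, of undefined] have "Dmat n \<notin> Units (ring_mat TYPE(real) n undefined)" .
    moreover have "Dmat n \<in> Units (ring_mat TYPE(real) n undefined)"
      unfolding Units_def using D Di Dmat_Dinv by (auto simp: ring_mat_simps)
    ultimately show ?thesis by blast
  next
    case (Some B)
    from mat_inverse(2)[OF D Some] have B: "Dmat n * B = 1\<^sub>m n" "B * Dmat n = 1\<^sub>m n" "B \<in> carrier_mat n n" by auto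
    have "B = B * (Dmat n * Dinv n)" using B(3) by (simp add: Dmat_Dinv)
    also have "\<dots> = (B * Dmat n) * Dinv n" using B(3) D Di by (simp add: assoc_mult_mat)
    also have "\<dots> = Dinv n" using B Di by simp
    finally show ?thesis by (simp add: minv_def Some)
  qed
qed

definition C0 :: "nat \<Rightarrow> nat \<Rightarrow> nat \<Rightarrow> real mat" where
  "C0 q r \<nu> = kron (1\<^sub>m \<nu>) (minv (Dmat r)) * calB0 q r \<nu> * minv (Dmat q)"

lemma C0_carrier: "C0 q r \<nu> \<in> carrier_mat (\<nu>*r) q"
proof -
  have K: "kron (1\<^sub>m \<nu>) (minv (Dmat r)) \<in> carrier_mat (\<nu>*r) (\<nu>*r)"
    by (simp add: kron_def minv_Dmat Dinv_def)
  have B: "calB0 q r \<nu> \<in> carrier_mat (\<nu>*r) q" by (simp add: calB0_def)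
  have D: "minv (Dmat q) \<in> carrier_mat q q" by (simp add: minv_Dmat Dinv_def)
  show ?thesis unfolding C0_def by (rule mult_carrier_mat[OF mult_carrier_mat[OF K B] D])
qed

lemma C0_entry: assumes "c < \<nu>*r" "l < q"
  shows "C0 q r \<nu> $$ (c,l) = (if c mod r + l = c div r then (-1)^(c mod r) * real (q choose (c div r + 1)) / (fact (c mod r) * fact l) else 0)"
proof -
  have r: "0 < r" using assms by (cases r) auto
  define K where "K = kron (1\<^sub>m \<nu>) (Dinv r)"
  have Kc: "K \<in> carrier_mat (\<nu>*r) (\<nu>*r)" by (simp add: K_def kron_def Dinv_def)
  have Kent: "K $$ (c, c') = (if c = c' then 1 / fact (c mod r) else 0)" if "c < \<nu>*r" "c' < \<nu>*r" for c c'
  proof -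
    have a: "c div r < \<nu>" "c' div r < \<nu>" using that by (auto simp: div_less_iff_less_mult mult.commute r)
    have b: "c mod r < r" "c' mod r < r" using r by auto
    have e: "(c div r = c' div r \<and> c mod r = c' mod r) = (c = c')"
    proof
      assume h: "c div r = c' div r \<and> c mod r = c' mod r"
      have "c = c div r * r + c mod r" by simp
      also have "\<dots> = c' div r * r + c' mod r" using h by simp
      also have "\<dots> = c'" by simp
      finally show "c = c'" .
    qed simp
    have "K $$ (c, c') = 1\<^sub>m \<nu> $$ (c div r, c' div r) * Dinv r $$ (c mod r, c' mod r)"
      using that by (simp add: K_def kron_def Dinv_def)
    also have "\<dots> = (if c div r = c' div r \<and> c mod r = c' mod r then 1 / fact (c mod r) else 0)"
      using a b by (simp add: Dinv_def)
    finally show ?thesis by (simp only: e)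
  qed
  have KB: "(K * calB0 q r \<nu>) $$ (c, l') = calB0 q r \<nu> $$ (c, l') / fact (c mod r)" if "l' < q" for l'
  proof -
    have "(K * calB0 q r \<nu>) $$ (c, l') = (\<Sum>c'\<in>{0..<\<nu>*r}. K $$ (c,c') * calB0 q r \<nu> $$ (c', l'))"
      using assms that Kc by (simp add: calB0_def scalar_prod_def)
    also have "\<dots> = K $$ (c,c) * calB0 q r \<nu> $$ (c, l')"
      using assms by (intro sum_single) (auto simp: Kent)
    finally show ?thesis using assms by (simp add: Kent)
  qed
  define KB where "KB = K * calB0 q r \<nu>"
  have KBc: "KB \<in> carrier_mat (\<nu>*r) q" unfolding KB_def by (rule mult_carrier_mat[OF Kc]) (simp add: calB0_def)
  have C0eq: "C0 q r \<nu> = KB * Dinv q" by (simp add: C0_def KB_def K_def minv_Dmat)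
  have "C0 q r \<nu> $$ (c,l) = (\<Sum>l'\<in>{0..<q}. KB $$ (c,l') * Dinv q $$ (l', l))"
    unfolding C0eq using assms KBc by (simp add: Dinv_def scalar_prod_def)
  also have "\<dots> = KB $$ (c,l) * Dinv q $$ (l, l)"
    using assms by (intro sum_single) (auto simp: Dinv_def)
  also have "\<dots> = calB0 q r \<nu> $$ (c, l) / fact (c mod r) / fact l"
    using assms by (simp add: KB KB_def Dinv_def)
  finally show ?thesis using assms r
    by (simp add: calB0_def Bmat_def)
qed

lemma ff_fact_nat: "k \<le> n \<Longrightarrow> ff n k * fact (n-k) = (fact n :: nat)"
proof (induction k)
  case 0 then show ?case by (simp add: ff_def)
next
  case (Suc k)
  have e: "n - k = Suc (n - Suc k)" using Suc.prems by simp
  have "ff n (Suc k) * fact (n - Suc k) = ff n k * ((n-k) * fact (n - Suc k))"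
    by (simp add: ff_Suc)
  also have "(n-k) * fact (n - Suc k) = (fact (n-k) :: nat)"
  proof -
    have "fact (n-k) = (fact (Suc (n - Suc k)) :: nat)" using e by simp
    also have "\<dots> = Suc (n - Suc k) * fact (n - Suc k)" by simp
    finally show ?thesis using e by simp
  qed
  finally show ?case using Suc by simp
qed

lemma ff_fact: "k \<le> n \<Longrightarrow> real (ff n k) = fact n / fact (n-k)"
proof -
  assume k: "k \<le> n"
  have "real (ff n k) * fact (n-k) = fact n"
  proof -
    have "real (ff n k * fact (n-k)) = real (fact n)" using ff_fact_nat[OF k] by simp
    then show ?thesis by (simp only: of_nat_mult of_nat_fact)
  qed
  then show ?thesis by (simp add: field_simps)
qed

lemma vander:
  assumes "l \<le> i" "i < (q::nat)"
  shows "(\<Sum>j\<in>{0..q-l-1}. (-1)^j * real (i+j choose i) * real (q choose (j+l+1))) = real ((q-i-1) choose (q-l-1))"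
proof -
  define n where "n = q - l - 1"
  have V: "(\<Sum>k\<in>{0..n}. ((- (of_nat i + 1) :: real) gchoose k) * (of_nat q gchoose (n-k))) = (- (of_nat i + 1) + of_nat q) gchoose n"
    by (rule gbinomial_Vandermonde)
  have t: "((- (of_nat i + 1) :: real) gchoose k) * (of_nat q gchoose (n-k)) = (-1)^k * real (i+k choose i) * real (q choose (k+l+1))"
    if "k \<in> {0..n}" for k
  proof -
    have a: "((- (of_nat i + 1) :: real) gchoose k) = (-1)^k * real (i+k choose i)"
    proof -
      have "((- (of_nat i + 1) :: real) gchoose k) = (-1)^k * ((of_nat i + 1 + of_nat k - 1) gchoose k)"
        by (rule gbinomial_minus)
      also have "(of_nat i + 1 + of_nat k - 1 :: real) = of_nat (i+k)" by simp
      also have "(of_nat (i+k) :: real) gchoose k = real (i+k choose k)" by (simp add: binomial_gbinomial)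
      also have "i+k choose k = i+k choose i" using binomial_symmetric[of k "i+k"] by simp
      finally show ?thesis .
    qed
    have b: "(of_nat q :: real) gchoose (n-k) = real (q choose (k+l+1))"
    proof -
      have "(of_nat q :: real) gchoose (n-k) = real (q choose (n-k))" by (simp add: binomial_gbinomial)
      also have "q choose (n-k) = q choose (q - (n-k))" using that n_def assms by (intro binomial_symmetric) auto
      also have "q - (n-k) = k+l+1" using that n_def assms by auto
      finally show ?thesis .
    qed
    show ?thesis unfolding a b by simp
  qed
  have r: "(- (of_nat i + 1) + of_nat q :: real) = of_nat (q-i-1)" using assms by (simp add: of_nat_diff)
  have "(\<Sum>j\<in>{0..n}. (-1)^j * real (i+j choose i) * real (q choose (j+l+1)))
      = (\<Sum>k\<in>{0..n}. ((- (of_nat i + 1) :: real) gchoose k) * (of_nat q gchoose (n-k)))"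
    by (rule sum.cong[OF refl], rule t[symmetric])
  also have "\<dots> = (- (of_nat i + 1) + of_nat q) gchoose n" by (rule V)
  also have "\<dots> = of_nat (q-i-1) gchoose n" by (simp only: r)
  also have "\<dots> = real ((q-i-1) choose n)" by (rule binomial_gbinomial[symmetric])
  finally have "(\<Sum>j\<in>{0..n}. (-1)^j * real (i+j choose i) * real (q choose (j+l+1))) = real ((q-i-1) choose n)" .
  then show ?thesis by (simp add: n_def)
qed

lemma realsum:
  assumes "i < q" "l < q" "q \<le> r" "q \<le> \<nu>"
  shows "(\<Sum>j<r. if j+l<\<nu> then real (ff (i+j) (j+l)) * (-1)^j * real (q choose (j+l+1)) / (fact j * fact l) else 0)
     = (if i = l then 1 else 0)"
proof (cases "i < l")
  case True
  have z: "ff (i+j) (j+l) = 0" for j using True by (intro ff_zero) simp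
  have "(if j+l<\<nu> then real (ff (i+j) (j+l)) * (-1)^j * real (q choose (j+l+1)) / (fact j * fact l) else 0) = 0" for j
    by (simp add: z)
  then show ?thesis using True by simp
next
  case False
  then have li: "l \<le> i" by simp
  define n where "n = q - l - 1"
  have trm: "(if j+l<\<nu> then real (ff (i+j) (j+l)) * (-1)^j * real (q choose (j+l+1)) / (fact j * fact l) else 0)
     = real (i choose l) * (if j \<le> n then (-1)^j * real (i+j choose i) * real (q choose (j+l+1)) else 0)" for j
  proof (cases "j \<le> n")
    case True
    then have jl: "j+l < \<nu>" using n_def assms by auto
    have f1: "real (ff (i+j) (j+l)) = fact (i+j) / fact (i-l)" using li by (simp add: ff_fact)
    have f2: "real (i choose l) = fact i / (fact l * fact (i-l))" using li by (simp add: binomial_fact)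
    have f3: "real (i+j choose i) = fact (i+j) / (fact i * fact j)" by (simp add: binomial_fact)
    show ?thesis using True jl by (simp add: f1 f2 f3 field_simps)
  next
    case False
    then have "q choose (j+l+1) = 0" using n_def assms by (intro binomial_eq_0) auto
    then show ?thesis using False by simp
  qed
  have "(\<Sum>j<r. if j+l<\<nu> then real (ff (i+j) (j+l)) * (-1)^j * real (q choose (j+l+1)) / (fact j * fact l) else 0)
      = real (i choose l) * (\<Sum>j<r. if j \<le> n then (-1)^j * real (i+j choose i) * real (q choose (j+l+1)) else 0)"
    by (simp only: trm sum_distrib_left)
  also have "(\<Sum>j<r. if j \<le> n then (-1)^j * real (i+j choose i) * real (q choose (j+l+1)) else 0)
      = (\<Sum>j\<in>{0..n}. (-1)^j * real (i+j choose i) * real (q choose (j+l+1)))"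
  proof -
    have sub: "{0..n} \<subseteq> {..<r}" using n_def assms by auto
    have "(\<Sum>j<r. if j \<le> n then (-1)^j * real (i+j choose i) * real (q choose (j+l+1)) else 0)
        = (\<Sum>j\<in>{0..n}. if j \<le> n then (-1)^j * real (i+j choose i) * real (q choose (j+l+1)) else 0)"
      using sub by (intro sum.mono_neutral_right) auto
    then show ?thesis by simp
  qed
  also have "\<dots> = real ((q-i-1) choose n)" unfolding n_def using vander[OF li assms(1)] .
  finally have S: "(\<Sum>j<r. if j+l<\<nu> then real (ff (i+j) (j+l)) * (-1)^j * real (q choose (j+l+1)) / (fact j * fact l) else 0)
      = real (i choose l) * real ((q-i-1) choose n)" .
  show ?thesis
  proof (cases "i = l")
    case True then show ?thesis using S n_def by simp
  next
    case False
    then have "(q-i-1) choose n = 0" using li assms n_def by (intro binomial_eq_0) auto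
    then show ?thesis using S False by simp
  qed
qed

lemma sum_lessThan_add: "(\<Sum>c<a+(b::nat). f c) = (\<Sum>c<a. f c) + (\<Sum>j<b. f (a+j))"
  by (induction b) (simp_all add: add.assoc)

lemma sum_split: "(\<Sum>c<\<nu>*(r::nat). f c) = (\<Sum>k<\<nu>. \<Sum>j<r. f (k*r+j))"
proof (induction \<nu>)
  case 0 then show ?case by simp
next
  case (Suc \<nu>)
  have "(\<Sum>c<Suc \<nu>*r. f c) = (\<Sum>c<\<nu>*r + r. f c)" by (simp add: add.commute)
  also have "\<dots> = (\<Sum>c<\<nu>*r. f c) + (\<Sum>j<r. f (\<nu>*r+j))" by (rule sum_lessThan_add)
  finally show ?case using Suc by simp
qed

lemma calM0_carrier: "calM0 q r \<nu> z \<in> carrier_mat q (\<nu>*r)"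
  by (simp add: calM0_def)

lemma prod_entry:
  assumes "i < q" "l < q" "q \<le> r" "q \<le> \<nu>"
  shows "(calM0 q r \<nu> z * map_mat complex_of_real (C0 q r \<nu>)) $$ (i,l) = (if i = l then 1 else 0)"
proof -
  define T where "T j = real (ff (i+j) (j+l)) * (-1)^j * real (q choose (j+l+1)) / (fact j * fact l)" for j
  have r: "0 < r" using assms by auto
  have "(calM0 q r \<nu> z * map_mat complex_of_real (C0 q r \<nu>)) $$ (i,l)
      = (\<Sum>c<\<nu>*r. calM0 q r \<nu> z $$ (i,c) * complex_of_real (C0 q r \<nu> $$ (c,l)))"
    using assms C0_carrier[of q r \<nu>] calM0_carrier[of q r \<nu> z]
    by (simp add: scalar_prod_def atLeast0LessThan)
  also have "\<dots> = (\<Sum>k<\<nu>. \<Sum>j<r. calM0 q r \<nu> z $$ (i,k*r+j) * complex_of_real (C0 q r \<nu> $$ (k*r+j,l)))"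
    by (rule sum_split)
  also have "\<dots> = (\<Sum>k<\<nu>. \<Sum>j<r. if k = j+l then z^(i-l) * complex_of_real (T j) else 0)"
  proof (intro sum.cong refl)
    fix k j assume kj: "k \<in> {..<\<nu>}" "j \<in> {..<r}"
    have c: "k*r+j < \<nu>*r"
    proof -
      have "(k+1)*r \<le> \<nu>*r" using kj by (intro mult_le_mono1) auto
      then show ?thesis using kj by simp
    qed
    have dm: "(k*r+j) div r = k" "(k*r+j) mod r = j" using kj by auto
    show "calM0 q r \<nu> z $$ (i,k*r+j) * complex_of_real (C0 q r \<nu> $$ (k*r+j,l))
        = (if k = j+l then z^(i-l) * complex_of_real (T j) else 0)"
      using kj assms c by (auto simp: calM0_entry C0_entry dm T_def)
  qed
  also have "\<dots> = (\<Sum>j<r. \<Sum>k<\<nu>. if k = j+l then z^(i-l) * complex_of_real (T j) else 0)"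
    by (rule sum.swap)
  also have "\<dots> = (\<Sum>j<r. z^(i-l) * complex_of_real (if j+l < \<nu> then T j else 0))"
    by (intro sum.cong refl) simp
  also have "\<dots> = z^(i-l) * complex_of_real (\<Sum>j<r. if j+l < \<nu> then T j else 0)"
    by (simp add: sum_distrib_left)
  also have "(\<Sum>j<r. if j+l < \<nu> then T j else 0) = (if i = l then 1 else 0)"
    unfolding T_def by (rule realsum[OF assms])
  finally show ?thesis by simp
qed

lemma prod_one:
  assumes "q \<le> r" "q \<le> \<nu>"
  shows "calM0 q r \<nu> z * map_mat complex_of_real (C0 q r \<nu>) = 1\<^sub>m q"
proof (rule eq_matI)
  fix i j assume ij: "i < dim_row (1\<^sub>m q)" "j < dim_col (1\<^sub>m q)"
  show "(calM0 q r \<nu> z * map_mat complex_of_real (C0 q r \<nu>)) $$ (i,j) = 1\<^sub>m q $$ (i,j)"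
    apply (subst prod_entry[OF _ _ assms])
    using ij by auto
qed (use C0_carrier[of q r \<nu>] calM0_carrier[of q r \<nu> z] in auto)

lemma pdiff: "pochhammer (x+1) (Suc k) - pochhammer x (Suc k) = of_nat (Suc k) * pochhammer (x+1) k"
  for x :: real
proof -
  have a: "pochhammer (x+1) (Suc k) = (x + 1 + of_nat k) * pochhammer (x+1) k" by (rule pochhammer_rec')
  have b: "pochhammer x (Suc k) = x * pochhammer (x+1) k" by (rule pochhammer_rec)
  show ?thesis unfolding a b by (simp add: algebra_simps)
qed

lemma findiff: "(\<forall>s<K. (\<Sum>k<K. y k * pochhammer (b + of_nat s) k) = (0::real)) \<Longrightarrow> \<forall>k<K. y k = 0"
proof (induction K arbitrary: b y)
  case 0 then show ?case by simp
next
  case (Suc K)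
  define y' where "y' k = y (Suc k) * of_nat (Suc k)" for k
  have "\<forall>s<K. (\<Sum>k<K. y' k * pochhammer ((b+1) + of_nat s) k) = 0"
  proof (intro allI impI)
    fix s assume s: "s < K"
    have h1: "(\<Sum>k<Suc K. y k * pochhammer (b + of_nat (Suc s)) k) = 0" using s by (intro Suc.prems[rule_format]) simp
    have h0: "(\<Sum>k<Suc K. y k * pochhammer (b + of_nat s) k) = 0" using s by (intro Suc.prems[rule_format]) simp
    have "0 = (\<Sum>k<Suc K. y k * pochhammer (b + of_nat (Suc s)) k) - (\<Sum>k<Suc K. y k * pochhammer (b + of_nat s) k)"
      using h0 h1 by simp
    also have "\<dots> = (\<Sum>k<Suc K. y k * (pochhammer ((b + of_nat s) + 1) k - pochhammer (b + of_nat s) k))"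
      by (simp add: sum_subtractf algebra_simps)
    also have "\<dots> = (\<Sum>k<K. y (Suc k) * (pochhammer ((b + of_nat s) + 1) (Suc k) - pochhammer (b + of_nat s) (Suc k)))"
      by (subst sum.lessThan_Suc_shift) simp
    also have "\<dots> = (\<Sum>k<K. y' k * pochhammer ((b+1) + of_nat s) k)"
      by (intro sum.cong refl) (simp only: pdiff y'_def, simp add: algebra_simps)
    finally show "(\<Sum>k<K. y' k * pochhammer ((b+1) + of_nat s) k) = 0" by simp
  qed
  from Suc.IH[OF this] have z: "\<forall>k<K. y (Suc k) = 0" by (simp add: y'_def)
  have "(\<Sum>k<Suc K. y k * pochhammer (b + of_nat 0) k) = 0" using Suc.prems by blast
  then have "y 0 + (\<Sum>k<K. y (Suc k) * pochhammer (b + of_nat 0) (Suc k)) = 0"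
    by (subst (asm) sum.lessThan_Suc_shift) simp
  then have "y 0 = 0" using z by simp
  then show ?case using z by (metis less_Suc_eq_0_disj)
qed

lemma coeff_zero:
  fixes a :: "nat \<Rightarrow> nat \<Rightarrow> complex"
  assumes H: "\<forall>z. (\<Sum>k<K. \<Sum>j<R. a k j * z^(e k j)) = 0"
    and N: "\<And>k j. k < K \<Longrightarrow> j < R \<Longrightarrow> e k j \<le> N"
  shows "(\<Sum>k<K. \<Sum>j<R. if e k j = p then a k j else 0) = 0"
proof (cases "p \<le> N")
  case False
  then have "\<And>k j. k < K \<Longrightarrow> j < R \<Longrightarrow> e k j \<noteq> p" using N by fastforce
  then show ?thesis by simp
next
  case True
  define c where "c p = (\<Sum>k<K. \<Sum>j<R. if e k j = p then a k j else 0)" for p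
  have "\<forall>z. (\<Sum>i\<le>N. c i * z^i) = 0"
  proof
    fix z :: complex
    have "(\<Sum>i\<le>N. c i * z^i) = (\<Sum>i\<le>N. \<Sum>k<K. \<Sum>j<R. (if e k j = i then a k j else 0) * z^i)"
      unfolding c_def by (simp add: sum_distrib_right)
    also have "\<dots> = (\<Sum>i\<le>N. \<Sum>k<K. \<Sum>j<R. if e k j = i then a k j * z^(e k j) else 0)"
      by (intro sum.cong refl) auto
    also have "\<dots> = (\<Sum>k<K. \<Sum>i\<le>N. \<Sum>j<R. if e k j = i then a k j * z^(e k j) else 0)"
      by (rule sum.swap)
    also have "\<dots> = (\<Sum>k<K. \<Sum>j<R. \<Sum>i\<le>N. if e k j = i then a k j * z^(e k j) else 0)"
      by (rule sum.cong[OF refl], rule sum.swap)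
    also have "\<dots> = (\<Sum>k<K. \<Sum>j<R. a k j * z^(e k j))"
      using N by (intro sum.cong refl) (simp add: sum.delta')
    also have "\<dots> = 0" using H by simp
    finally show "(\<Sum>i\<le>N. c i * z^i) = 0" .
  qed
  then have "\<forall>i\<le>N. c i = 0" by (simp add: polyfun_eq_0)
  then show ?thesis using True by (simp add: c_def)
qed

lemma ff_poch: "real (ff (p+k) k) = pochhammer (real p + 1) k"
proof -
  have "real (ff (p+k) k) = fact (p+k) / fact p" by (simp add: ff_fact)
  also have "\<dots> = pochhammer (real p + 1) k"
  proof (induction k)
    case 0 then show ?case by simp
  next
    case (Suc k)
    have "(fact (p + Suc k) :: real) / fact p = (real p + 1 + of_nat k) * (fact (p+k) / fact p)"
      by (simp add: algebra_simps)
    also have "\<dots> = pochhammer (real p + 1) (Suc k)" by (simp add: Suc pochhammer_rec')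
    finally show ?case .
  qed
  finally show ?thesis .
qed

lemma kernel:
  fixes x :: "nat \<Rightarrow> nat \<Rightarrow> real"
  assumes H: "\<forall>z::complex. \<forall>i<q. (\<Sum>k<q. \<Sum>j<r. of_nat (ff (i+j) k) * z^(i+j-k) * complex_of_real (x k j)) = 0"
    and k0: "k0 < q" and j0: "j0 < r"
  shows "x k0 j0 = 0"
proof -
  have C: "(\<Sum>k<q. \<Sum>j<r. if i+j-k = p then real (ff (i+j) k) * x k j else 0) = 0" if i: "i < q" for i p
  proof -
    have "(\<Sum>k<q. \<Sum>j<r. if i+j-k = p then complex_of_nat (ff (i+j) k) * complex_of_real (x k j) else 0) = 0"
      using H i by (intro coeff_zero[where N="i+r"]) (auto simp: mult_ac)
    then have "complex_of_real (\<Sum>k<q. \<Sum>j<r. if i+j-k = p then real (ff (i+j) k) * x k j else 0) = 0"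
      by (simp add: if_distrib cong: if_cong)
    then show ?thesis by (simp only: of_real_eq_0_iff)
  qed
  define y where "y k = (if k0 \<le> k + j0 \<and> k + j0 - k0 < r then x k (k + j0 - k0) else 0)" for k
  define b where "b = real j0 - real k0 + 1"
  have "\<forall>s<q. (\<Sum>k<q. y k * pochhammer (b + of_nat s) k) = 0"
  proof (intro allI impI)
    fix s assume s: "s < q"
    show "(\<Sum>k<q. y k * pochhammer (b + of_nat s) k) = 0"
    proof (cases "k0 \<le> s + j0")
      case True
      define p where "p = s + j0 - k0"
      have "(\<Sum>k<q. y k * pochhammer (b + of_nat s) k) = (\<Sum>k<q. \<Sum>j<r. if s+j-k = p then real (ff (s+j) k) * x k j else 0)"
      proof (intro sum.cong refl)
        fix k assume k: "k \<in> {..<q}"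
        have pt: "(if s+j-k = p then real (ff (s+j) k) * x k j else 0)
             = (if j = k + j0 - k0 \<and> k0 \<le> k + j0 then real (ff (p+k) k) * x k (k + j0 - k0) else 0)" for j
        proof -
          have kk: "k0 \<le> s + j0" by fact
          consider (a) "s+j<k" | (b) "k \<le> s+j" by linarith
          then show ?thesis
          proof cases
            case a
            have f0: "ff (s+j) k = 0" using a by (rule ff_zero)
            have nc: "\<not> (j = k + j0 - k0 \<and> k0 \<le> k + j0)" using a kk p_def by auto
            have L: "(if s+j-k = p then real (ff (s+j) k) * x k j else 0) = 0" by (simp add: f0)
            show ?thesis by (simp only: L if_not_P[OF nc])
          next
            case b
            have iff: "(s+j-k = p) \<longleftrightarrow> (j = k + j0 - k0 \<and> k0 \<le> k + j0)" using b kk p_def by auto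
            show ?thesis
            proof (cases "s+j-k = p")
              case True
              then have "s+j = p+k" using b by simp
              then have e1: "ff (s+j) k = ff (p+k) k" by simp
              have e2: "x k j = x k (k+j0-k0)" using True iff by simp
              have C: "j = k + j0 - k0 \<and> k0 \<le> k + j0" using True iff by simp
              show ?thesis by (subst if_P[OF True], subst if_P[OF C], simp add: e1 e2)
            next
              case False
              then have nc: "\<not> (j = k + j0 - k0 \<and> k0 \<le> k + j0)" using iff by simp
              show ?thesis by (simp only: if_not_P[OF False] if_not_P[OF nc])
            qed
          qed
        qed
        have "(\<Sum>j<r. if s+j-k = p then real (ff (s+j) k) * x k j else 0)
            = (\<Sum>j<r. if j = k + j0 - k0 then (if k0 \<le> k + j0 then real (ff (p+k) k) * x k (k + j0 - k0) else 0) else 0)"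
          by (intro sum.cong refl) (simp add: pt)
        also have "\<dots> = (if k + j0 - k0 < r then (if k0 \<le> k + j0 then real (ff (p+k) k) * x k (k + j0 - k0) else 0) else 0)"
          by (simp add: sum.delta')
        also have "\<dots> = y k * real (ff (p+k) k)" by (simp add: y_def)
        also have "real (ff (p+k) k) = pochhammer (b + of_nat s) k"
        proof -
          have "b + of_nat s = real p + 1" using True by (simp add: b_def p_def of_nat_diff)
          then show ?thesis by (simp add: ff_poch)
        qed
        finally show "y k * pochhammer (b + of_nat s) k = (\<Sum>j<r. if s+j-k = p then real (ff (s+j) k) * x k j else 0)"
          by simp
      qed
      also have "\<dots> = 0" using C[OF s] by simp
      finally show ?thesis .
    next
      case False
      have h0: "y k * pochhammer (b + of_nat s) k = 0" for k
      proof (cases "k0 \<le> k + j0")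
        case True
        have "b + of_nat s = - of_nat (k0 - j0 - s - 1)" using False by (simp add: b_def of_nat_diff)
        moreover have "k0 - j0 - s - 1 < k" using False True by simp
        ultimately have "pochhammer (b + of_nat s) k = 0" by (auto simp: pochhammer_eq_0_iff)
        then show ?thesis by simp
      next
        case False
        then show ?thesis by (simp add: y_def)
      qed
      show ?thesis by (rule sum.neutral) (use h0 in blast)
    qed
  qed
  from findiff[OF this] k0 have "y k0 = 0" by blast
  then show ?thesis using j0 by (simp add: y_def)
qed

lemma prodC:
  assumes "i < q" "l < q" "C \<in> carrier_mat (\<nu>*r) q"
  shows "(calM0 q r \<nu> z * map_mat complex_of_real C) $$ (i,l)
     = (\<Sum>k<\<nu>. \<Sum>j<r. of_nat (ff (i+j) k) * z^(i+j-k) * complex_of_real (C $$ (k*r+j,l)))"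
proof -
  have "(calM0 q r \<nu> z * map_mat complex_of_real C) $$ (i,l)
      = (\<Sum>c<\<nu>*r. calM0 q r \<nu> z $$ (i,c) * complex_of_real (C $$ (c,l)))"
    using assms calM0_carrier[of q r \<nu> z]
    by (simp add: scalar_prod_def atLeast0LessThan)
  also have "\<dots> = (\<Sum>k<\<nu>. \<Sum>j<r. calM0 q r \<nu> z $$ (i,k*r+j) * complex_of_real (C $$ (k*r+j,l)))"
    by (rule sum_split)
  also have "\<dots> = (\<Sum>k<\<nu>. \<Sum>j<r. of_nat (ff (i+j) k) * z^(i+j-k) * complex_of_real (C $$ (k*r+j,l)))"
  proof (intro sum.cong refl)
    fix k j assume kj: "k \<in> {..<\<nu>}" "j \<in> {..<r}"
    show "calM0 q r \<nu> z $$ (i,k*r+j) * complex_of_real (C $$ (k*r+j,l))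
        = of_nat (ff (i+j) k) * z^(i+j-k) * complex_of_real (C $$ (k*r+j,l))"
      using kj assms by (simp add: calM0_entry)
  qed
  finally show ?thesis .
qed

lemma unique_q:
  assumes C1: "C1 \<in> carrier_mat (q*r) q" and C2: "C2 \<in> carrier_mat (q*r) q"
    and H1: "\<forall>z. calM0 q r q z * map_mat complex_of_real C1 = 1\<^sub>m q"
    and H2: "\<forall>z. calM0 q r q z * map_mat complex_of_real C2 = 1\<^sub>m q"
  shows "C1 = C2"
proof (rule eq_matI)
  fix c l assume cl: "c < dim_row C2" "l < dim_col C2"
  then have c: "c < q*r" and l: "l < q" using C2 by auto
  have r: "0 < r" using c by (cases r) auto
  define x where "x k j = C1 $$ (k*r+j, l) - C2 $$ (k*r+j, l)" for k j
  have H: "\<forall>z::complex. \<forall>i<q. (\<Sum>k<q. \<Sum>j<r. of_nat (ff (i+j) k) * z^(i+j-k) * complex_of_real (x k j)) = 0"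
  proof (intro allI impI)
    fix z :: complex and i assume i: "i < q"
    have e1: "(calM0 q r q z * map_mat complex_of_real C1) $$ (i,l) = (calM0 q r q z * map_mat complex_of_real C2) $$ (i,l)"
      using H1 H2 by simp
    have "(\<Sum>k<q. \<Sum>j<r. of_nat (ff (i+j) k) * z^(i+j-k) * complex_of_real (x k j))
        = (\<Sum>k<q. \<Sum>j<r. of_nat (ff (i+j) k) * z^(i+j-k) * complex_of_real (C1 $$ (k*r+j,l)))
          - (\<Sum>k<q. \<Sum>j<r. of_nat (ff (i+j) k) * z^(i+j-k) * complex_of_real (C2 $$ (k*r+j,l)))"
      by (simp add: x_def sum_subtractf[symmetric] of_real_diff right_diff_distrib)
    also have "\<dots> = 0" using e1 prodC[OF i l C1, of z] prodC[OF i l C2, of z] by simp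
    finally show "(\<Sum>k<q. \<Sum>j<r. of_nat (ff (i+j) k) * z^(i+j-k) * complex_of_real (x k j)) = 0" .
  qed
  have cd: "c div r < q" using c r by (simp add: div_less_iff_less_mult mult.commute)
  have "x (c div r) (c mod r) = 0" by (rule kernel[OF H cd]) (use r in simp)
  moreover have "c div r * r + c mod r = c" by simp
  ultimately show "C1 $$ (c,l) = C2 $$ (c,l)" by (simp add: x_def)
qed (use C1 C2 in auto)

definition Emat :: "nat \<Rightarrow> nat \<Rightarrow> nat \<Rightarrow> real mat" where
  "Emat q r \<nu> = mat (\<nu>*r) q (\<lambda>(c,l). if c = (\<nu>-1)*r \<and> l = 0 then 1 else 0)"

lemma other_sol:
  assumes "q < \<nu>" "q \<le> r" "0 < q"
  shows "calM0 q r \<nu> z * map_mat complex_of_real (C0 q r \<nu> + Emat q r \<nu>) = 1\<^sub>m q"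
proof -
  have Ec: "Emat q r \<nu> \<in> carrier_mat (\<nu>*r) q" by (simp add: Emat_def)
  have Cc: "C0 q r \<nu> + Emat q r \<nu> \<in> carrier_mat (\<nu>*r) q" using Ec C0_carrier by simp
  have r: "0 < r" using assms by simp
  show ?thesis
  proof (rule eq_matI)
    fix i l assume il: "i < dim_row (1\<^sub>m q)" "l < dim_col (1\<^sub>m q)"
    then have i: "i < q" and l: "l < q" by auto
    have "(calM0 q r \<nu> z * map_mat complex_of_real (C0 q r \<nu> + Emat q r \<nu>)) $$ (i,l)
      = (\<Sum>k<\<nu>. \<Sum>j<r. of_nat (ff (i+j) k) * z^(i+j-k) * complex_of_real ((C0 q r \<nu> + Emat q r \<nu>) $$ (k*r+j,l)))"
      by (rule prodC[OF i l Cc])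
    also have "\<dots> = (\<Sum>k<\<nu>. \<Sum>j<r. of_nat (ff (i+j) k) * z^(i+j-k) * complex_of_real (C0 q r \<nu> $$ (k*r+j,l)))"
    proof (intro sum.cong refl)
      fix k j assume kj: "k \<in> {..<\<nu>}" "j \<in> {..<r}"
      have c: "k*r+j < \<nu>*r"
      proof -
        have "(k+1)*r \<le> \<nu>*r" using kj by (intro mult_le_mono1) auto
        then show ?thesis using kj by simp
      qed
      have "of_nat (ff (i+j) k) * z^(i+j-k) * complex_of_real (Emat q r \<nu> $$ (k*r+j,l)) = 0"
      proof (cases "k*r+j = (\<nu>-1)*r \<and> l = 0")
        case True
        then have "k = \<nu> - 1 \<and> j = 0"
        proof -
          have "(k*r+j) div r = k" "(k*r+j) mod r = j" using kj by auto
          moreover have "((\<nu>-1)*r) div r = \<nu>-1" "((\<nu>-1)*r) mod r = 0" using r by auto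
          ultimately show ?thesis using True by metis
        qed
        then have "ff (i+j) k = 0" using i assms by (intro ff_zero) auto
        then show ?thesis by simp
      next
        case False
        have E0: "Emat q r \<nu> $$ (k*r+j,l) = 0" using c l False unfolding Emat_def by auto
        show ?thesis by (simp add: E0)
      qed
      then show "of_nat (ff (i+j) k) * z^(i+j-k) * complex_of_real ((C0 q r \<nu> + Emat q r \<nu>) $$ (k*r+j,l))
        = of_nat (ff (i+j) k) * z^(i+j-k) * complex_of_real (C0 q r \<nu> $$ (k*r+j,l))"
        using c l Ec C0_carrier[of q r \<nu>] by (simp add: distrib_left)
    qed
    also have "\<dots> = (calM0 q r \<nu> z * map_mat complex_of_real (C0 q r \<nu>)) $$ (i,l)"
      by (rule prodC[OF i l C0_carrier, symmetric])
    also have "\<dots> = 1\<^sub>m q $$ (i,l)" using prod_one[of q r \<nu> z] assms by simp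
    finally show "(calM0 q r \<nu> z * map_mat complex_of_real (C0 q r \<nu> + Emat q r \<nu>)) $$ (i,l) = 1\<^sub>m q $$ (i,l)" .
  qed (use Cc calM0_carrier[of q r \<nu> z] in auto)
qed

lemma other_ne:
  assumes "q < \<nu>" "0 < r" "0 < q"
  shows "C0 q r \<nu> + Emat q r \<nu> \<noteq> C0 q r \<nu>"
proof
  assume h: "C0 q r \<nu> + Emat q r \<nu> = C0 q r \<nu>"
  have c: "(\<nu>-1)*r < \<nu>*r" using assms by simp
  have "(C0 q r \<nu> + Emat q r \<nu>) $$ ((\<nu>-1)*r, 0) = C0 q r \<nu> $$ ((\<nu>-1)*r, 0) + 1"
    using c assms C0_carrier[of q r \<nu>] by (simp add: Emat_def)
  then show False using h by simp
qed

theorem proposition7p1: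
  fixes q r \<nu> :: nat
  assumes "0 < q" and "0 < r" and "0 < \<nu>" and "q \<le> r" and "q \<le> \<nu>"
  shows "(\<exists>C \<in> carrier_mat (\<nu> * r) q.
            \<forall>z. calM0 q r \<nu> z * map_mat complex_of_real C = 1\<^sub>m q)
       \<and> (\<forall>C \<in> carrier_mat (\<nu> * r) q.
            (\<forall>z. calM0 q r \<nu> z * map_mat complex_of_real C = 1\<^sub>m q) \<longrightarrow>
            (\<forall>b \<in> carrier_vec q. \<forall>z.
               calM0 q r \<nu> z *\<^sub>v map_vec complex_of_real (C *\<^sub>v b) = map_vec complex_of_real b))
       \<and> ((\<exists>!C. C \<in> carrier_mat (\<nu> * r) q \<and>
              (\<forall>z. calM0 q r \<nu> z * map_mat complex_of_real C = 1\<^sub>m q)) \<longleftrightarrow> \<nu> = q)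
       \<and> (\<forall>z. calM0 q r \<nu> z *
              map_mat complex_of_real
                (kron (1\<^sub>m \<nu>) (minv (Dmat r)) * calB0 q r \<nu> * minv (Dmat q)) = 1\<^sub>m q)"
proof (intro conjI)
  show "\<exists>C \<in> carrier_mat (\<nu> * r) q. \<forall>z. calM0 q r \<nu> z * map_mat complex_of_real C = 1\<^sub>m q"
    using C0_carrier prod_one[OF assms(4,5)] by blast
  show "\<forall>z. calM0 q r \<nu> z * map_mat complex_of_real (kron (1\<^sub>m \<nu>) (minv (Dmat r)) * calB0 q r \<nu> * minv (Dmat q)) = 1\<^sub>m q"
    using prod_one[OF assms(4,5)] by (simp add: C0_def)
  show "\<forall>C \<in> carrier_mat (\<nu> * r) q.
            (\<forall>z. calM0 q r \<nu> z * map_mat complex_of_real C = 1\<^sub>m q) \<longrightarrow>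
            (\<forall>b \<in> carrier_vec q. \<forall>z.
               calM0 q r \<nu> z *\<^sub>v map_vec complex_of_real (C *\<^sub>v b) = map_vec complex_of_real b)"
  proof (intro ballI impI allI)
    fix C :: "real mat" and b :: "real vec" and z :: complex
    assume C: "C \<in> carrier_mat (\<nu> * r) q" and H: "\<forall>z. calM0 q r \<nu> z * map_mat complex_of_real C = 1\<^sub>m q"
      and b: "b \<in> carrier_vec q"
    have mC: "map_mat complex_of_real C \<in> carrier_mat (\<nu>*r) q" using C by simp
    have mb: "map_vec complex_of_real b \<in> carrier_vec q" using b by simp
    have "map_vec complex_of_real (C *\<^sub>v b) = map_mat complex_of_real C *\<^sub>v map_vec complex_of_real b"
      by (rule of_real_hom.mult_mat_vec_hom[OF C b])
    then have "calM0 q r \<nu> z *\<^sub>v map_vec complex_of_real (C *\<^sub>v b)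
        = (calM0 q r \<nu> z * map_mat complex_of_real C) *\<^sub>v map_vec complex_of_real b"
      using mC mb calM0_carrier[of q r \<nu> z] by (simp add: assoc_mult_mat_vec)
    also have "\<dots> = map_vec complex_of_real b" using H mb by simp
    finally show "calM0 q r \<nu> z *\<^sub>v map_vec complex_of_real (C *\<^sub>v b) = map_vec complex_of_real b" .
  qed
  show "(\<exists>!C. C \<in> carrier_mat (\<nu> * r) q \<and>
              (\<forall>z. calM0 q r \<nu> z * map_mat complex_of_real C = 1\<^sub>m q)) \<longleftrightarrow> \<nu> = q"
  proof
    assume ex: "\<exists>!C. C \<in> carrier_mat (\<nu> * r) q \<and> (\<forall>z. calM0 q r \<nu> z * map_mat complex_of_real C = 1\<^sub>m q)"
    show "\<nu> = q"
    proof (rule ccontr)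
      assume "\<nu> \<noteq> q"
      then have lt: "q < \<nu>" using assms by simp
      have a: "C0 q r \<nu> \<in> carrier_mat (\<nu> * r) q \<and> (\<forall>z. calM0 q r \<nu> z * map_mat complex_of_real (C0 q r \<nu>) = 1\<^sub>m q)"
        using C0_carrier prod_one[OF assms(4,5)] by blast
      have b: "C0 q r \<nu> + Emat q r \<nu> \<in> carrier_mat (\<nu> * r) q \<and> (\<forall>z. calM0 q r \<nu> z * map_mat complex_of_real (C0 q r \<nu> + Emat q r \<nu>) = 1\<^sub>m q)"
        using C0_carrier[of q r \<nu>] other_sol[OF lt assms(4) assms(1)] by (simp add: Emat_def)
      from ex a b have "C0 q r \<nu> + Emat q r \<nu> = C0 q r \<nu>" by blast
      with other_ne[OF lt assms(2) assms(1)] show False by blast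
    qed
  next
    assume eq: "\<nu> = q"
    show "\<exists>!C. C \<in> carrier_mat (\<nu> * r) q \<and> (\<forall>z. calM0 q r \<nu> z * map_mat complex_of_real C = 1\<^sub>m q)"
    proof (rule ex1I)
      show "C0 q r \<nu> \<in> carrier_mat (\<nu> * r) q \<and> (\<forall>z. calM0 q r \<nu> z * map_mat complex_of_real (C0 q r \<nu>) = 1\<^sub>m q)"
        using C0_carrier prod_one[OF assms(4,5)] by blast
    next
      fix C assume C: "C \<in> carrier_mat (\<nu> * r) q \<and> (\<forall>z. calM0 q r \<nu> z * map_mat complex_of_real C = 1\<^sub>m q)"
      show "C = C0 q r \<nu>"
        using unique_q[of C q r "C0 q r q"] C C0_carrier[of q r q] prod_one[of q r q] eq assms by simp
    qed
  qed
qed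

end
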